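(* Assume the standing hypotheses and definitions in the context. For any $(t_0,x_0)\in\mathbb{R}\times\mathbb{R}^n$, the function $t\mapsto H(t,X(t,t_0,x_0))$ is a solution of the linear system $x'=A(t)x$.
   Context: Standing hypotheses: $A:\mathbb{R}\to\mathbb{R}^{n\times n}$ is continuous and bounded, $T(t,s)$ is the evolution operator of $x'=A(t)x$. $\mu:\mathbb{R}\to(0,\infty)$ is an increasing differentiable growth rate: $\mu(0)=1$, $\lim_{t\to-\infty}\mu(t)=0$, $\lim_{t\to+\infty}\mu(t)=+\infty$. The system $x'=A(t)x$ admits an algebraic dichotomy: projections $P(s)$, $Q(s)=I-P(s)$, constants $K,\alpha>0$ with $T(t,s)P(s)=P(t)T(t,s)$, $\|T(t,s)P(s)\|\le K(\mu(t)/\mu(s))^{-\alpha}$ ($t\ge s$), $\|T(t,s)Q(s)\|\le K(\mu(s)/\mu(t))^{-\alpha}$ ($t\le s$). $f:\mathbb{R}\times\mathbb{R}^n\to\mathbb{R}^n$ is continuous, $\|f(t,x)\|\le\beta\mu'(t)\mu^{-1}(t)$, $\|f(t,x_1)-f(t,x_2)\|\le\gamma\mu'(t)\mu^{-1}(t)\|x_1-x_2\|$ for constants $\beta,\gamma\ge0$, and $6K\gamma\alpha^{-1}<1$. $X(t,\tau,\xi)$ is the solution of $x'=A(t)x+f(t,x)$ with $X(\tau)=\xi$. For each $(\tau,\xi)$, $h(t,(\tau,\xi))$ denotes the unique solution bounded on $\mathbb{R}$ of $Z'=A(t)Z-f(t,X(t,\tau,\xi))$ (it exists and is unique under these hypotheses).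 Define $H(t,x)=x+h(t,(t,x))$. *)

theory Defs
  imports "HOL-Analysis.Analysis"
begin

definition mnorm :: "real^'n^'n \<Rightarrow> real" where
  "mnorm M = onorm (\<lambda>x. M *v x)"

definition solves_on_R :: "(real \<Rightarrow> real^'n^'n) \<Rightarrow> (real \<Rightarrow> real^'n) \<Rightarrow> (real \<Rightarrow> real^'n) \<Rightarrow> bool" where
  "solves_on_R A g x \<longleftrightarrow> (\<forall>t. (x has_vector_derivative (A t *v x t + g t)) (at t))"

text \<open>\<open>H(t,x) = x + h(t,(t,x))\<close>; here \<open>h t \<tau> \<xi>\<close> stands for \<open>h(t,(\<tau>,\<xi>))\<close>.\<close>
definition Hmap :: "(real \<Rightarrow> real \<Rightarrow> real^'n \<Rightarrow> real^'n) \<Rightarrow> real \<Rightarrow> real^'n \<Rightarrow> real^'n" where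
  "Hmap h t x = x + h t t x"

end

theory Submission
  imports Defs
begin


lemma inner_sq_deriv:
  fixes d :: "real \<Rightarrow> 'a::real_inner"
  assumes "(d has_vector_derivative D) (at t)"
  shows "((\<lambda>t. inner (d t) (d t)) has_real_derivative (2 * inner (d t) D)) (at t)"
proof -
  have "(d has_derivative (\<lambda>h. h *\<^sub>R D)) (at t)"
    using assms by (simp add: has_vector_derivative_def)
  from has_derivative_inner[OF this this]
  have "((\<lambda>t. inner (d t) (d t)) has_derivative (\<lambda>h. inner (d t) (h *\<^sub>R D) + inner (h *\<^sub>R D) (d t))) (at t)" .
  moreover have "(\<lambda>h. inner (d t) (h *\<^sub>R D) + inner (h *\<^sub>R D) (d t)) = (\<lambda>h. (2 * inner (d t) D) * h)"
    by (auto simp: inner_commute algebra_simps)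
  ultimately show ?thesis by (simp add: has_field_derivative_def)
qed

lemma gron:
  fixes u u' \<Phi> c :: "real \<Rightarrow> real"
  assumes ud: "\<And>t. (u has_real_derivative u' t) (at t)"
    and pd: "\<And>t. (\<Phi> has_real_derivative c t) (at t)"
    and upos: "\<And>t. u t \<ge> 0"
    and ub: "\<And>t. \<bar>u' t\<bar> \<le> 2 * c t * u t"
    and u0: "u t0 = 0"
  shows "u t = 0"
proof (cases "t0 \<le> t")
  case True
  have "(\<lambda>s. u s * exp (- 2 * \<Phi> s)) t \<le> (\<lambda>s. u s * exp (- 2 * \<Phi> s)) t0"
  proof (rule DERIV_nonpos_imp_nonincreasing[OF True])
    fix x
    have "((\<lambda>s. u s * exp (- 2 * \<Phi> s)) has_real_derivative
        (u' x * exp (- 2 * \<Phi> x) + u x * (exp (- 2 * \<Phi> x) * (- 2 * c x)))) (at x)"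
      by (rule DERIV_cong[OF DERIV_mult[OF ud DERIV_fun_exp[OF DERIV_cmult[OF pd, of "- 2"]]]]) (simp add: algebra_simps)
    moreover have "u' x * exp (- 2 * \<Phi> x) + u x * (exp (- 2 * \<Phi> x) * (- 2 * c x))
        = exp (- 2 * \<Phi> x) * (u' x - 2 * c x * u x)" by (simp add: algebra_simps)
    moreover have "u' x - 2 * c x * u x \<le> 0" using ub[of x] by linarith
    ultimately show "\<exists>y. ((\<lambda>s. u s * exp (- 2 * \<Phi> s)) has_real_derivative y) (at x) \<and> y \<le> 0"
      by (metis mult_nonneg_nonpos exp_ge_zero)
  qed
  then have "u t * exp (- 2 * \<Phi> t) \<le> 0" using u0 by simp
  then show ?thesis using upos[of t] by (simp add: mult_le_0_iff)
next
  case False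
  then have F: "t \<le> t0" by simp
  have "(\<lambda>s. u s * exp (2 * \<Phi> s)) t \<le> (\<lambda>s. u s * exp (2 * \<Phi> s)) t0"
  proof (rule DERIV_nonneg_imp_nondecreasing[OF F])
    fix x
    have "((\<lambda>s. u s * exp (2 * \<Phi> s)) has_real_derivative
        (u' x * exp (2 * \<Phi> x) + u x * (exp (2 * \<Phi> x) * (2 * c x)))) (at x)"
      by (rule DERIV_cong[OF DERIV_mult[OF ud DERIV_fun_exp[OF DERIV_cmult[OF pd, of "2"]]]]) (simp add: algebra_simps)
    moreover have "u' x * exp (2 * \<Phi> x) + u x * (exp (2 * \<Phi> x) * (2 * c x))
        = exp (2 * \<Phi> x) * (u' x + 2 * c x * u x)" by (simp add: algebra_simps)
    moreover have "u' x + 2 * c x * u x \<ge> 0" using ub[of x] by linarith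
    ultimately show "\<exists>y. ((\<lambda>s. u s * exp (2 * \<Phi> s)) has_real_derivative y) (at x) \<and> y \<ge> 0"
      by (metis mult_nonneg_nonneg exp_ge_zero)
  qed
  then have "u t * exp (2 * \<Phi> t) \<le> 0" using u0 by simp
  then show ?thesis using upos[of t] by (simp add: mult_le_0_iff)
qed

lemma uniq:
  fixes A :: "real \<Rightarrow> real^'n^'n" and x y g1 g2 :: "real \<Rightarrow> real^'n"
    and mu mu' :: "real \<Rightarrow> real"
  assumes Ab: "\<And>t v. norm (A t *v v) \<le> M * norm v"
    and mu_pos: "\<And>t. mu t > 0"
    and mu_deriv: "\<And>t. (mu has_real_derivative mu' t) (at t)"
    and xd: "\<And>t. (x has_vector_derivative (A t *v x t + g1 t)) (at t)"
    and yd: "\<And>t. (y has_vector_derivative (A t *v y t + g2 t)) (at t)"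
    and gl: "\<And>t. norm (g1 t - g2 t) \<le> \<gamma> * mu' t * inverse (mu t) * norm (x t - y t)"
    and init: "x t0 = y t0"
  shows "x t = y t"
proof -
  define d where "d = (\<lambda>t. x t - y t)"
  have dd: "(d has_vector_derivative (A t *v d t + (g1 t - g2 t))) (at t)" for t
  proof -
    have "(d has_vector_derivative ((A t *v x t + g1 t) - (A t *v y t + g2 t))) (at t)"
      unfolding d_def by (rule has_vector_derivative_diff[OF xd yd])
    moreover have "(A t *v x t + g1 t) - (A t *v y t + g2 t) = A t *v d t + (g1 t - g2 t)"
      by (simp add: d_def matrix_vector_mult_diff_distrib)
    ultimately show ?thesis by simp
  qed
  define u where "u = (\<lambda>t. inner (d t) (d t))"
  define u' where "u' = (\<lambda>t. 2 * inner (d t) (A t *v d t + (g1 t - g2 t)))"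
  define \<Phi> where "\<Phi> = (\<lambda>t. M * t + \<gamma> * ln (mu t))"
  define c where "c = (\<lambda>t. M + \<gamma> * (mu' t / mu t))"
  have ud: "(u has_real_derivative u' t) (at t)" for t
    unfolding u_def u'_def by (rule inner_sq_deriv[OF dd])
  have pd: "(\<Phi> has_real_derivative c t) (at t)" for t
  proof -
    have "(\<Phi> has_real_derivative (M * 1 + \<gamma> * (1 / mu t * mu' t))) (at t)"
      unfolding \<Phi>_def
      by (intro DERIV_add DERIV_cmult DERIV_ident DERIV_ln_divide[THEN DERIV_chain2] mu_deriv mu_pos)
    then show ?thesis by (simp add: c_def)
  qed
  have upos: "u t \<ge> 0" for t by (simp add: u_def)
  have ub: "\<bar>u' t\<bar> \<le> 2 * c t * u t" for t
  proof -
    have n1: "norm (A t *v d t) \<le> M * norm (d t)" by (rule Ab)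
    have n2: "norm (g1 t - g2 t) \<le> \<gamma> * (mu' t / mu t) * norm (d t)"
      using gl[of t] by (simp add: d_def divide_inverse)
    have "\<bar>inner (d t) (A t *v d t + (g1 t - g2 t))\<bar> \<le> norm (d t) * norm (A t *v d t + (g1 t - g2 t))"
      by (rule Cauchy_Schwarz_ineq2)
    also have "\<dots> \<le> norm (d t) * (M * norm (d t) + \<gamma> * (mu' t / mu t) * norm (d t))"
      by (intro mult_left_mono order.trans[OF norm_triangle_ineq] add_mono n1 n2) simp
    also have "\<dots> = c t * u t"
      by (simp add: c_def u_def algebra_simps power2_norm_eq_inner[symmetric] power2_eq_square)
    finally show ?thesis by (simp add: u'_def abs_mult)
  qed
  have "u t = 0"
    by (rule gron[OF ud pd upos ub, of t0]) (simp add: u_def d_def init)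
  then show ?thesis by (simp add: u_def d_def)
qed

lemma mnorm_bound: "norm (M *v v) \<le> mnorm M * norm v"
  unfolding mnorm_def by (rule onorm[OF matrix_vector_mul_bounded_linear])

lemma mnorm_nonneg: "mnorm M \<ge> 0"
  unfolding mnorm_def by (rule onorm_pos_le[OF matrix_vector_mul_bounded_linear])

lemma matvec_left_bl: "bounded_linear (\<lambda>M::real^'n^'m. M *v c)"
  unfolding linear_conv_bounded_linear[symmetric]
  by (rule linearI) (simp_all add: matrix_vector_mult_add_rdistrib scaleR_matrix_vector_assoc)

lemma zero_sol:
  fixes A :: "real \<Rightarrow> real^'n^'n"
    and T :: "real \<Rightarrow> real \<Rightarrow> real^'n^'n"
    and P :: "real \<Rightarrow> real^'n^'n"
    and mu mu' :: "real \<Rightarrow> real" and z :: "real \<Rightarrow> real^'n"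
  assumes Ab: "\<And>t v. norm (A t *v v) \<le> M * norm v"
    and T_init: "\<And>s. T s s = mat 1"
    and T_deriv: "\<And>t s. ((\<lambda>t. T t s) has_vector_derivative (A t ** T t s)) (at t)"
    and mu_pos: "\<And>t. mu t > 0"
    and mu_deriv: "\<And>t. (mu has_real_derivative mu' t) (at t)"
    and mu_bot: "(mu \<longlongrightarrow> 0) at_bot"
    and mu_top: "filterlim mu at_top at_top"
    and P_proj: "\<And>s. P s ** P s = P s"
    and alpha_pos: "\<alpha> > 0"
    and P_inv: "\<And>t s. T t s ** P s = P t ** T t s"
    and dich_P: "\<And>t s. t \<ge> s \<Longrightarrow> mnorm (T t s ** P s) \<le> K * (mu t / mu s) powr (-\<alpha>)"
    and dich_Q: "\<And>t s. t \<le> s \<Longrightarrow> mnorm (T t s ** (mat 1 - P s)) \<le> K * (mu s / mu t) powr (-\<alpha>)"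
    and zd: "\<And>t. (z has_vector_derivative (A t *v z t)) (at t)"
    and zb: "bounded (range z)"
  shows "z t = 0"
proof -
  obtain C where C: "\<And>s. norm (z s) \<le> C" using zb by (auto simp: bounded_iff)
  have zT: "z t = T t s *v z s" for t s
  proof -
    have a: "(z has_vector_derivative A t *v z t + 0) (at t)" for t using zd by simp
    have b: "((\<lambda>t. T t s *v z s) has_vector_derivative A t *v (T t s *v z s) + 0) (at t)" for t
    proof -
      have "((\<lambda>t. T t s *v z s) has_vector_derivative (A t ** T t s) *v z s) (at t)"
        by (rule bounded_linear.has_vector_derivative[OF matvec_left_bl T_deriv])
      then show ?thesis by (simp add: matrix_vector_mul_assoc)
    qed
    show ?thesis
      by (rule uniq[OF Ab mu_pos mu_deriv a b, where \<gamma> = 0, of s]) (simp_all add: T_init)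
  qed
  have PP: "P s *v (P s *v v) = P s *v v" for s v
    by (simp add: matrix_vector_mul_assoc P_proj)
  define Q where "Q = (\<lambda>s v. v - P s *v v)"
  have QQ: "Q s (Q s v) = Q s v" for s v
    by (simp add: Q_def matrix_vector_mult_diff_distrib PP)
  have Qm: "(mat 1 - P s) *v v = Q s v" for s v
    by (simp add: Q_def matrix_vector_mult_diff_rdistrib)
  have Kpos: "mnorm (T s s ** P s) \<le> K" for s
    using dich_P[of s s] mu_pos[of s] by simp
  have KposQ: "mnorm (T s s ** (mat 1 - P s)) \<le> K" for s
    using dich_Q[of s s] mu_pos[of s] by simp
  have K0: "K \<ge> 0" using Kpos[of 0] mnorm_nonneg[of "T 0 0 ** P 0"] by linarith
  have C0: "C \<ge> 0" using C[of 0] norm_ge_zero[of "z 0"] by linarith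
  have Pz: "norm (P s *v z s) \<le> K * C" for s
  proof -
    have "norm (P s *v z s) = norm ((T s s ** P s) *v z s)" by (simp add: T_init)
    also have "\<dots> \<le> mnorm (T s s ** P s) * norm (z s)" by (rule mnorm_bound)
    also have "\<dots> \<le> K * C" by (intro mult_mono Kpos C K0 norm_ge_zero)
    finally show ?thesis .
  qed
  have Qz: "norm (Q s (z s)) \<le> K * C" for s
  proof -
    have "norm (Q s (z s)) = norm ((T s s ** (mat 1 - P s)) *v z s)" by (simp add: T_init Qm)
    also have "\<dots> \<le> mnorm (T s s ** (mat 1 - P s)) * norm (z s)" by (rule mnorm_bound)
    also have "\<dots> \<le> K * C" by (intro mult_mono KposQ C K0 norm_ge_zero)
    finally show ?thesis .
  qed
  have Pbound: "norm (P t *v z t) \<le> K * K * C * (mu s / mu t) powr \<alpha>" if "s \<le> t" for s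
  proof -
    have "P t *v z t = (T t s ** P s) *v (P s *v z s)"
      by (simp add: zT[of t s] matrix_vector_mul_assoc[symmetric] PP)
         (simp add: matrix_vector_mul_assoc P_inv)
    then have "norm (P t *v z t) \<le> mnorm (T t s ** P s) * norm (P s *v z s)"
      by (simp add: mnorm_bound)
    also have "\<dots> \<le> K * (mu t / mu s) powr (-\<alpha>) * (K * C)"
      by (intro mult_mono dich_P that Pz mnorm_nonneg norm_ge_zero) (use K0 in simp)
    also have "(mu t / mu s) powr (-\<alpha>) = (mu s / mu t) powr \<alpha>"
      using mu_pos[of s] mu_pos[of t] by (simp add: powr_minus powr_divide)
    finally show ?thesis by (simp add: algebra_simps)
  qed
  have Qbound: "norm (Q t (z t)) \<le> K * K * C * (mu t / mu s) powr \<alpha>" if "t \<le> s" for s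
  proof -
    have "Q t (z t) = (T t s ** (mat 1 - P s)) *v (Q s (z s))"
    proof -
      have "Q t (z t) = T t s *v z s - (P t ** T t s) *v z s"
        by (simp add: Q_def zT[of t s] matrix_vector_mul_assoc)
      also have "\<dots> = T t s *v (Q s (z s))"
        by (simp add: P_inv[symmetric] Q_def matrix_vector_mul_assoc[symmetric] matrix_vector_mult_diff_distrib)
      also have "\<dots> = T t s *v ((mat 1 - P s) *v Q s (z s))" by (simp add: Qm QQ)
      finally show ?thesis by (simp add: matrix_vector_mul_assoc)
    qed
    then have "norm (Q t (z t)) \<le> mnorm (T t s ** (mat 1 - P s)) * norm (Q s (z s))"
      by (simp add: mnorm_bound)
    also have "\<dots> \<le> K * (mu s / mu t) powr (-\<alpha>) * (K * C)"
      by (intro mult_mono dich_Q that Qz mnorm_nonneg norm_ge_zero) (use K0 in simp)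
    also have "(mu s / mu t) powr (-\<alpha>) = (mu t / mu s) powr \<alpha>"
      using mu_pos[of s] mu_pos[of t] by (simp add: powr_minus powr_divide)
    finally show ?thesis by (simp add: algebra_simps)
  qed
  have l1: "((\<lambda>s. K * K * C * (mu s / mu t) powr \<alpha>) \<longlongrightarrow> K * K * C * 0) at_bot"
    by (intro tendsto_mult tendsto_const tendsto_zero_powrI)
       (use mu_bot alpha_pos mu_pos in \<open>auto intro!: tendsto_divide_zero always_eventually divide_nonneg_nonneg less_imp_le\<close>)
  have "norm (P t *v z t) \<le> K * K * C * 0"
    by (rule tendsto_le[OF trivial_limit_at_bot_linorder l1 tendsto_const])
       (auto intro: Pbound simp: eventually_at_bot_linorder)
  then have P0: "P t *v z t = 0" by simp
  have l2: "((\<lambda>s. K * K * C * (mu t / mu s) powr \<alpha>) \<longlongrightarrow> K * K * C * 0) at_top"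
    by (intro tendsto_mult tendsto_const tendsto_zero_powrI tendsto_divide_0[OF tendsto_const]
        filterlim_at_top_imp_at_infinity mu_top)
       (use alpha_pos mu_pos in \<open>auto intro!: always_eventually divide_nonneg_nonneg less_imp_le\<close>)
  have "norm (Q t (z t)) \<le> K * K * C * 0"
    by (rule tendsto_le[OF trivial_limit_at_top_linorder l2 tendsto_const])
       (auto intro: Qbound simp: eventually_at_top_linorder)
  then have "Q t (z t) = 0" by simp
  with P0 show ?thesis by (simp add: Q_def)
qed


theorem lemma3p5:
  fixes A :: "real \<Rightarrow> real^'n^'n"
    and T :: "real \<Rightarrow> real \<Rightarrow> real^'n^'n"
    and P :: "real \<Rightarrow> real^'n^'n"
    and mu mu' :: "real \<Rightarrow> real"
    and K \<alpha> \<beta> \<gamma> :: real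
    and f :: "real \<Rightarrow> real^'n \<Rightarrow> real^'n"
    and X :: "real \<Rightarrow> real \<Rightarrow> real^'n \<Rightarrow> real^'n"
    and h :: "real \<Rightarrow> real \<Rightarrow> real^'n \<Rightarrow> real^'n"
    and t0 :: real and x0 :: "real^'n"
  assumes A_cont: "continuous_on UNIV A"
    and A_bdd: "bounded (range A)"
    and T_init: "\<And>s. T s s = mat 1"
    and T_deriv: "\<And>t s. ((\<lambda>t. T t s) has_vector_derivative (A t ** T t s)) (at t)"
    and mu_pos: "\<And>t. mu t > 0"
    and mu_incr: "strict_mono mu"
    and mu_deriv: "\<And>t. (mu has_real_derivative mu' t) (at t)"
    and mu_0: "mu 0 = 1"
    and mu_bot: "(mu \<longlongrightarrow> 0) at_bot"
    and mu_top: "filterlim mu at_top at_top"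
    and P_proj: "\<And>s. P s ** P s = P s"
    and K_pos: "K > 0" and alpha_pos: "\<alpha> > 0"
    and P_inv: "\<And>t s. T t s ** P s = P t ** T t s"
    and dich_P: "\<And>t s. t \<ge> s \<Longrightarrow> mnorm (T t s ** P s) \<le> K * (mu t / mu s) powr (-\<alpha>)"
    and dich_Q: "\<And>t s. t \<le> s \<Longrightarrow> mnorm (T t s ** (mat 1 - P s)) \<le> K * (mu s / mu t) powr (-\<alpha>)"
    and f_cont: "continuous_on UNIV (\<lambda>(t, x). f t x)"
    and beta_nonneg: "\<beta> \<ge> 0" and gamma_nonneg: "\<gamma> \<ge> 0"
    and f_bdd: "\<And>t x. norm (f t x) \<le> \<beta> * mu' t * inverse (mu t)"
    and f_lip: "\<And>t x1 x2. norm (f t x1 - f t x2) \<le> \<gamma> * mu' t * inverse (mu t) * norm (x1 - x2)"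
    and small: "6 * K * \<gamma> / \<alpha> < 1"
    and X_sol: "\<And>\<tau> \<xi>. solves_on_R A (\<lambda>t. f t (X t \<tau> \<xi>)) (\<lambda>t. X t \<tau> \<xi>) \<and> X \<tau> \<tau> \<xi> = \<xi>"
    and h_sol: "\<And>\<tau> \<xi>. solves_on_R A (\<lambda>t. - f t (X t \<tau> \<xi>)) (\<lambda>t. h t \<tau> \<xi>)
                      \<and> bounded (range (\<lambda>t. h t \<tau> \<xi>))"
  shows "solves_on_R A (\<lambda>t. 0) (\<lambda>t. Hmap h t (X t t0 x0))"
proof -
  obtain B where B: "\<And>t. norm (A t) \<le> B" using A_bdd by (auto simp: bounded_iff)
  define M where "M = real CARD('n) * real CARD('n) * B"
  have Ab: "norm (A t *v v) \<le> M * norm v" for t v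
  proof -
    have "onorm ((*v) (A t)) \<le> M" unfolding M_def
    proof (rule onorm_le_matrix_component)
      fix i j
      have "\<bar>A t $ i $ j\<bar> \<le> norm (A t $ i)" by (rule component_le_norm_cart)
      also have "\<dots> \<le> norm (A t)" by (rule Finite_Cartesian_Product.norm_nth_le)
      finally show "\<bar>A t $ i $ j\<bar> \<le> B" using B[of t] by linarith
    qed
    then show ?thesis
      using onorm[OF matrix_vector_mul_bounded_linear, of "A t" v]
      by (meson mult_right_mono norm_ge_zero order_trans)
  qed
  have Xd: "\<And>t \<tau> \<xi>. ((\<lambda>t. X t \<tau> \<xi>) has_vector_derivative (A t *v X t \<tau> \<xi> + f t (X t \<tau> \<xi>))) (at t)"
    using X_sol by (simp add: solves_on_R_def)
  have hd: "\<And>t \<tau> \<xi>. ((\<lambda>t. h t \<tau> \<xi>) has_vector_derivative (A t *v h t \<tau> \<xi> + - f t (X t \<tau> \<xi>))) (at t)"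
    using h_sol by (simp add: solves_on_R_def)
  have flow: "X s t (X t t0 x0) = X s t0 x0" for s t
    by (rule uniq[OF Ab mu_pos mu_deriv Xd Xd f_lip, of t]) (simp add: X_sol)
  have hh: "h s t (X t t0 x0) = h s t0 x0" for s t
  proof -
    define z where "z = (\<lambda>s. h s t (X t t0 x0) - h s t0 x0)"
    have zd: "(z has_vector_derivative (A s *v z s)) (at s)" for s
    proof -
      have "(z has_vector_derivative ((A s *v h s t (X t t0 x0) + - f s (X s t (X t t0 x0)))
                 - (A s *v h s t0 x0 + - f s (X s t0 x0)))) (at s)"
        unfolding z_def by (rule has_vector_derivative_diff[OF hd hd])
      then show ?thesis by (simp add: flow z_def matrix_vector_mult_diff_distrib)
    qed
    have zb: "bounded (range z)"
    proof -
      obtain B1 where B1: "\<And>s. norm (h s t (X t t0 x0)) \<le> B1"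
        using h_sol[of t "X t t0 x0"] by (auto simp: bounded_iff)
      obtain B2 where B2: "\<And>s. norm (h s t0 x0) \<le> B2"
        using h_sol[of t0 x0] by (auto simp: bounded_iff)
      have "norm (z s) \<le> B1 + B2" for s
        unfolding z_def using norm_triangle_ineq4[of "h s t (X t t0 x0)" "h s t0 x0"] B1[of s] B2[of s]
        by linarith
      then show ?thesis by (auto simp: bounded_iff)
    qed
    have "z s = 0"
      by (rule zero_sol[OF Ab T_init T_deriv mu_pos mu_deriv mu_bot mu_top P_proj alpha_pos P_inv
            dich_P dich_Q zd zb])
    then show ?thesis by (simp add: z_def)
  qed
  have eq: "(\<lambda>t. Hmap h t (X t t0 x0)) = (\<lambda>t. X t t0 x0 + h t t0 x0)"
    by (simp add: Hmap_def hh)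
  show ?thesis
    unfolding solves_on_R_def eq
  proof
    fix t
    have "((\<lambda>t. X t t0 x0 + h t t0 x0) has_vector_derivative
        ((A t *v X t t0 x0 + f t (X t t0 x0)) + (A t *v h t t0 x0 + - f t (X t t0 x0)))) (at t)"
      by (rule has_vector_derivative_add[OF Xd hd])
    then show "((\<lambda>t. X t t0 x0 + h t t0 x0) has_vector_derivative
        (A t *v (X t t0 x0 + h t t0 x0) + 0)) (at t)"
      by (simp add: matrix_vector_right_distrib)
  qed
qed

end
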